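(* Let $T>0$ and let $(S(s,t,\cdot))_{0\le s\le t\le T}$ be a family of maps from $\bar\Gamma$ into itself such that: (1) (translation invariance) $S(s,t,f+c)=S(s,t,f)+c$ for all $f\in\bar\Gamma$, $c\in\mathbb{R}$, $s\le t$; (2) (monotonicity) $f\le g$ implies $S(s,t,f)\le S(s,t,g)$ for all $s\le t$, $f,g\in\bar\Gamma$; (3) (locality) there is $\alpha>1$ such that for all $f,g\in\bar\Gamma$, $s\le t$, $x\in\mathbb{R}^2$, $R\ge0$: $\sup_{z\in\mathcal{B}(x,R)}|S(s,t,f)(z)-S(s,t,g)(z)|\le\sup_{z\in\mathcal{B}(x,R+\alpha(t-s))}|f(z)-g(z)|$, where $\mathcal{B}(x,r)$ is the closed ball of center $x$ and radius $r$ for the supremum norm on $\mathbb{R}^2$; (4) (semi-group) $S(r,t,f)=S(s,t,S(r,s,f))$ for all $r\le s\le t$ and $S(t,t,f)=f$, for all $f\in\bar\Gamma$; (5) (compatibility with linear solutions) for every $\rho\in\mathbb{R}\times[-1,0]$, with $f_\rho(x)=\rho\cdot x$, and all $s\le t$, $S(s,t,f_\rho)=f_\rho+v(\rho)(t-s)$. Then for any $f\in\bar\Gamma$, if $(x,t)\mapsto S(0,t,f)(x)$ is continuous on $\mathbb{R}^2\times[0,T]$, it is a viscosity solution of $\partial_t u=v(\nabla u)$, $u(\cdot,0)=f$, on $\mathbb{R}^2\times[0,T]$.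
   Context: $\bar\Gamma$ is the set of continuous $f:\mathbb{R}^2\to\mathbb{R}$ with $f(x,y_2)-f(x,y_1)\in[-(y_2-y_1),0]$ for all $x\in\mathbb{R}$ and $y_1\le y_2$. $v(\rho_1,\rho_2)=\frac1\pi\sqrt{\pi^2\rho_1^2+4\sin^2(\pi\rho_2)}$. A viscosity solution of $\partial_tu=v(\nabla u)$, $u(\cdot,0)=f$ on $\mathbb{R}^2\times[0,T]$ is a continuous $u$ with $u(\cdot,0)=f$ such that for every $\phi\in C^\infty(\mathbb{R}^2\times(0,T))$ and $(x_0,t_0)\in\mathbb{R}^2\times(0,T)$ with $\phi(x_0,t_0)=u(x_0,t_0)$: if $\phi\ge u$ on a neighbourhood of $(x_0,t_0)$ then $\partial_t\phi(x_0,t_0)\le v(\nabla\phi(x_0,t_0))$ (subsolution), and if $\phi\le u$ on a neighbourhood of $(x_0,t_0)$ then $\partial_t\phi(x_0,t_0)\ge v(\nabla\phi(x_0,t_0))$ (supersolution). *)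

theory Defs
  imports "HOL-Analysis.Analysis"
begin

definition Gamma_bar :: "((real \<times> real) \<Rightarrow> real) set" where
  "Gamma_bar = {f. continuous_on UNIV f \<and>
     (\<forall>x y1 y2. y1 \<le> y2 \<longrightarrow> f (x, y2) - f (x, y1) \<in> {-(y2 - y1)..0})}"

definition vel :: "real \<times> real \<Rightarrow> real" where
  "vel \<rho> = (1 / pi) * sqrt (pi\<^sup>2 * (fst \<rho>)\<^sup>2 + 4 * (sin (pi * snd \<rho>))\<^sup>2)"

definition sup_ball :: "real \<times> real \<Rightarrow> real \<Rightarrow> (real \<times> real) set" where
  "sup_ball x r = {z. max \<bar>fst z - fst x\<bar> \<bar>snd z - snd x\<bar> \<le> r}"

definition lin_fun :: "real \<times> real \<Rightarrow> (real \<times> real) \<Rightarrow> real" where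
  "lin_fun \<rho> x = fst \<rho> * fst x + snd \<rho> * snd x"

definition coord_dirs :: "((real \<times> real) \<times> real) set" where
  "coord_dirs = {((1, 0), 0), ((0, 1), 0), ((0, 0), 1)}"

definition partial_on ::
  "((real \<times> real) \<times> real) set \<Rightarrow> ((real \<times> real) \<times> real)
     \<Rightarrow> (((real \<times> real) \<times> real) \<Rightarrow> real) \<Rightarrow> (((real \<times> real) \<times> real) \<Rightarrow> real) \<Rightarrow> bool" where
  "partial_on S e g g' \<longleftrightarrow> (\<forall>p\<in>S. ((\<lambda>h. g (p + h *\<^sub>R e)) has_real_derivative g' p) (at 0))"

inductive_set iter_partials ::
  "((real \<times> real) \<times> real) set \<Rightarrow> (((real \<times> real) \<times> real) \<Rightarrow> real)
     \<Rightarrow> (((real \<times> real) \<times> real) \<Rightarrow> real) set"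
  for S f where
  base: "f \<in> iter_partials S f"
| step: "g \<in> iter_partials S f \<Longrightarrow> e \<in> coord_dirs \<Longrightarrow> partial_on S e g g'
           \<Longrightarrow> g' \<in> iter_partials S f"

definition smooth_on ::
  "((real \<times> real) \<times> real) set \<Rightarrow> (((real \<times> real) \<times> real) \<Rightarrow> real) \<Rightarrow> bool" where
  "smooth_on S f \<longleftrightarrow> (\<forall>g\<in>iter_partials S f. continuous_on S g \<and>
                        (\<forall>e\<in>coord_dirs. \<exists>g'. partial_on S e g g'))"

definition viscosity_solution ::
  "real \<Rightarrow> ((real \<times> real) \<Rightarrow> real) \<Rightarrow> ((real \<times> real) \<Rightarrow> real \<Rightarrow> real) \<Rightarrow> bool" where
  "viscosity_solution T f u \<longleftrightarrow>
     continuous_on (UNIV \<times> {0..T}) (\<lambda>(x, t). u x t) \<and>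
     (\<forall>x. u x 0 = f x) \<and>
     (\<forall>\<phi> x0 t0. smooth_on (UNIV \<times> {0<..<T}) \<phi> \<and> t0 \<in> {0<..<T} \<and> \<phi> (x0, t0) = u x0 t0 \<longrightarrow>
        (let dt = deriv (\<lambda>t. \<phi> (x0, t)) t0;
             grad = (deriv (\<lambda>a. \<phi> ((a, snd x0), t0)) (fst x0),
                     deriv (\<lambda>b. \<phi> ((fst x0, b), t0)) (snd x0))
         in ((\<exists>N. open N \<and> (x0, t0) \<in> N \<and>
                 (\<forall>x t. (x, t) \<in> N \<and> t \<in> {0<..<T} \<longrightarrow> u x t \<le> \<phi> (x, t)))
               \<longrightarrow> dt \<le> vel grad) \<and>
            ((\<exists>N. open N \<and> (x0, t0) \<in> N \<and>
                 (\<forall>x t. (x, t) \<in> N \<and> t \<in> {0<..<T} \<longrightarrow> \<phi> (x, t) \<le> u x t))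
               \<longrightarrow> dt \<ge> vel grad)))"

end

theory Submission
  imports Defs
begin

lemma quot_lims:
  fixes K :: "real \<Rightarrow> real"
  assumes d: "(K has_real_derivative L) (at 0)"
  shows "((\<lambda>h. (K h - K 0) / h) \<longlongrightarrow> L) (at_right 0)" "((\<lambda>h. (K h - K 0) / h) \<longlongrightarrow> L) (at_left 0)"
proof -
  have "((\<lambda>h. (K h - K 0) / h) \<longlongrightarrow> L) (at 0)" using d by (simp add: DERIV_def)
  then show "((\<lambda>h. (K h - K 0) / h) \<longlongrightarrow> L) (at_right 0)" "((\<lambda>h. (K h - K 0) / h) \<longlongrightarrow> L) (at_left 0)"
    by (auto intro: tendsto_mono[rotated] at_le)
qed

lemma deriv_right_lower:
  fixes K :: "real \<Rightarrow> real"
  assumes d: "(K has_real_derivative L) (at 0)" and "\<delta> > 0"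
    and b: "\<And>k. 0 < k \<Longrightarrow> k < \<delta> \<Longrightarrow> K k - K 0 \<ge> c * k"
  shows "L \<ge> c"
proof -
  have t: "((\<lambda>h. (K h - K 0) / h) \<longlongrightarrow> L) (at_right 0)"
    using quot_lims[OF d] by blast
  have "eventually (\<lambda>h. h \<in> {0<..<\<delta>}) (at_right (0::real))" using eventually_at_right_real assms(2) by blast
  hence "eventually (\<lambda>h. c \<le> (K h - K 0) / h) (at_right 0)"
    by (rule eventually_mono) (use b in \<open>auto simp: pos_le_divide_eq\<close>)
  thus ?thesis using tendsto_lowerbound[OF t] by simp
qed

lemma deriv_left_upper:
  fixes K :: "real \<Rightarrow> real"
  assumes d: "(K has_real_derivative L) (at 0)" and "\<delta> > 0"
    and b: "\<And>h. 0 < h \<Longrightarrow> h < \<delta> \<Longrightarrow> K 0 - K (-h) \<le> c * h"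
  shows "L \<le> c"
proof -
  have t: "((\<lambda>h. (K h - K 0) / h) \<longlongrightarrow> L) (at_left 0)"
    using quot_lims[OF d] by blast
  have "eventually (\<lambda>h. h \<in> {-\<delta><..<0}) (at_left (0::real))" using eventually_at_left_real assms(2) by simp
  hence "eventually (\<lambda>h. c \<ge> (K h - K 0) / h) (at_left 0)"
  proof (rule eventually_mono)
    fix h assume "h \<in> {-\<delta><..<0}"
    then have "K 0 - K (-(-h)) \<le> c * (-h)" using b[of "-h"] by auto
    then show "c \<ge> (K h - K 0) / h" using \<open>h \<in> _\<close> by (auto simp: neg_divide_le_eq)
  qed
  thus ?thesis using tendsto_upperbound[OF t] by simp
qed

lemma deriv_left_lower:
  fixes K :: "real \<Rightarrow> real"
  assumes d: "(K has_real_derivative L) (at 0)" and "\<delta> > 0"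
    and b: "\<And>h. 0 < h \<Longrightarrow> h < \<delta> \<Longrightarrow> K 0 - K (-h) \<ge> c * h"
  shows "L \<ge> c"
proof -
  have t: "((\<lambda>h. (K h - K 0) / h) \<longlongrightarrow> L) (at_left 0)"
    using quot_lims[OF d] by blast
  have "eventually (\<lambda>h. h \<in> {-\<delta><..<0}) (at_left (0::real))" using eventually_at_left_real assms(2) by simp
  hence "eventually (\<lambda>h. c \<le> (K h - K 0) / h) (at_left 0)"
  proof (rule eventually_mono)
    fix h assume "h \<in> {-\<delta><..<0}"
    then have "K 0 - K (-(-h)) \<ge> c * (-h)" using b[of "-h"] by auto
    then show "c \<le> (K h - K 0) / h" using \<open>h \<in> _\<close> by (auto simp: neg_le_divide_eq)
  qed
  thus ?thesis using tendsto_lowerbound[OF t] by simp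
qed

lemma mvt_bound:
  fixes F F' :: "real \<Rightarrow> real"
  assumes d: "\<And>z. min a b \<le> z \<Longrightarrow> z \<le> max a b \<Longrightarrow> (F has_real_derivative F' z) (at z)"
    and bd: "\<And>z. min a b \<le> z \<Longrightarrow> z \<le> max a b \<Longrightarrow> \<bar>F' z - c\<bar> \<le> \<eta>"
  shows "\<bar>F b - F a - c * (b - a)\<bar> \<le> \<eta> * \<bar>b - a\<bar>"
proof (cases a b rule: linorder_cases)
  case less
  then obtain z where z: "a < z" "z < b" "F b - F a = (b - a) * F' z"
    using MVT2[of a b F F'] d by auto
  have "F b - F a - c * (b - a) = (b - a) * (F' z - c)" using z(3) by (simp add: algebra_simps)
  then have "\<bar>F b - F a - c * (b - a)\<bar> = \<bar>b - a\<bar> * \<bar>F' z - c\<bar>"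
    by (simp add: abs_mult)
  also have "\<dots> \<le> \<bar>b - a\<bar> * \<eta>" using bd[of z] z less by (intro mult_left_mono) auto
  finally show ?thesis by (simp add: mult.commute)
next
  case equal then show ?thesis using bd[of a] by auto
next
  case greater
  then obtain z where z: "b < z" "z < a" "F a - F b = (a - b) * F' z"
    using MVT2[of b a F F'] d by auto
  have "F b - F a - c * (b - a) = (b - a) * (F' z - c)" using z(3) by (simp add: algebra_simps)
  then have "\<bar>F b - F a - c * (b - a)\<bar> = \<bar>b - a\<bar> * \<bar>F' z - c\<bar>"
    by (simp add: abs_mult)
  also have "\<dots> \<le> \<bar>b - a\<bar> * \<eta>" using bd[of z] z greater by (intro mult_left_mono) auto
  finally show ?thesis by (simp add: mult.commute)
qed

lemma dist3: "dist ((a::real, b::real), t::real) ((a0, b0), t0) \<le> \<bar>a - a0\<bar> + \<bar>b - b0\<bar> + \<bar>t - t0\<bar>"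
proof -
  have "dist (a, b) (a0, b0) \<le> \<bar>a - a0\<bar> + \<bar>b - b0\<bar>"
    using sqrt_sum_squares_le_sum_abs by (simp add: dist_Pair_Pair dist_real_def)
  moreover have "dist ((a, b), t) ((a0, b0), t0) \<le> dist (a, b) (a0, b0) + \<bar>t - t0\<bar>"
    using sqrt_sum_squares_le_sum_abs[of "dist (a, b) (a0, b0)" "dist t t0"]
    by (simp add: dist_Pair_Pair[of "(a,b)"] dist_real_def)
  ultimately show ?thesis by linarith
qed

lemma lin_in: assumes "snd p \<in> {-1..0}" shows "(\<lambda>x. lin_fun p x + C) \<in> Gamma_bar"
proof -
  have c: "continuous_on UNIV (\<lambda>x. lin_fun p x + C)"
    unfolding lin_fun_def by (intro continuous_intros)
  have "lin_fun p (x, y2) + C - (lin_fun p (x, y1) + C) \<in> {-(y2 - y1)..0}" if "y1 \<le> y2" for x y1 y2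
  proof -
    have e: "lin_fun p (x, y2) + C - (lin_fun p (x, y1) + C) = snd p * (y2 - y1)"
      by (simp add: lin_fun_def algebra_simps)
    have "snd p * (y2 - y1) \<le> 0" using assms that by (intro mult_nonpos_nonneg) auto
    moreover have "(snd p + 1) * (y2 - y1) \<ge> 0" using assms that by (intro mult_nonneg_nonneg) auto
    ultimately show ?thesis unfolding e by (auto simp: algebra_simps)
  qed
  then show ?thesis using c unfolding Gamma_bar_def mem_Collect_eq by blast
qed

lemma min_step: "y1 \<le> (y2::real) \<Longrightarrow> g2 - g1 \<in> {-(y2 - y1)..0} \<Longrightarrow> h2 - h1 \<in> {-(y2 - y1)..(0::real)} \<Longrightarrow> min g2 h2 - min g1 h1 \<in> {-(y2 - y1)..0}"
  unfolding atLeastAtMost_iff min_def by (smt (verit))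
lemma max_step: "y1 \<le> (y2::real) \<Longrightarrow> g2 - g1 \<in> {-(y2 - y1)..0} \<Longrightarrow> h2 - h1 \<in> {-(y2 - y1)..(0::real)} \<Longrightarrow> max g2 h2 - max g1 h1 \<in> {-(y2 - y1)..0}"
  unfolding atLeastAtMost_iff max_def by (smt (verit))

lemma Gamma_barI:
  assumes "continuous_on UNIV g" "\<And>x y1 y2. y1 \<le> y2 \<Longrightarrow> g (x, y2) - g (x, y1) \<in> {-(y2 - y1)..0}"
  shows "g \<in> Gamma_bar"
  unfolding Gamma_bar_def mem_Collect_eq using assms by blast

lemma Gamma_barD:
  assumes "g \<in> Gamma_bar"
  shows "continuous_on UNIV g" "\<And>x y1 y2. y1 \<le> y2 \<Longrightarrow> g (x, y2) - g (x, y1) \<in> {-(y2 - y1)..0}"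
  using assms unfolding Gamma_bar_def mem_Collect_eq by blast+

lemma min_in: assumes "g \<in> Gamma_bar" "h \<in> Gamma_bar" shows "(\<lambda>x. min (g x) (h x)) \<in> Gamma_bar"
proof (rule Gamma_barI)
  show "continuous_on UNIV (\<lambda>x. min (g x) (h x))"
    by (rule continuous_on_min[OF Gamma_barD(1)[OF assms(1)] Gamma_barD(1)[OF assms(2)]])
  fix x and y1 y2 :: real assume y: "y1 \<le> y2"
  show "min (g (x, y2)) (h (x, y2)) - min (g (x, y1)) (h (x, y1)) \<in> {-(y2 - y1)..0}"
    by (rule min_step[OF y Gamma_barD(2)[OF assms(1) y] Gamma_barD(2)[OF assms(2) y]])
qed

lemma max_in: assumes "g \<in> Gamma_bar" "h \<in> Gamma_bar" shows "(\<lambda>x. max (g x) (h x)) \<in> Gamma_bar"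
proof (rule Gamma_barI)
  show "continuous_on UNIV (\<lambda>x. max (g x) (h x))"
    by (rule continuous_on_max[OF Gamma_barD(1)[OF assms(1)] Gamma_barD(1)[OF assms(2)]])
  fix x and y1 y2 :: real assume y: "y1 \<le> y2"
  show "max (g (x, y2)) (h (x, y2)) - max (g (x, y1)) (h (x, y1)) \<in> {-(y2 - y1)..0}"
    by (rule max_step[OF y Gamma_barD(2)[OF assms(1) y] Gamma_barD(2)[OF assms(2) y]])
qed

lemma op_upper:
  fixes S :: "real \<Rightarrow> real \<Rightarrow> ((real \<times> real) \<Rightarrow> real) \<Rightarrow> ((real \<times> real) \<Rightarrow> real)"
  assumes transl: "\<And>s t g c. 0 \<le> s \<Longrightarrow> s \<le> t \<Longrightarrow> t \<le> T \<Longrightarrow> g \<in> Gamma_bar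
                      \<Longrightarrow> S s t (\<lambda>x. g x + c) = (\<lambda>x. S s t g x + c)"
    and mono: "\<And>s t g h. 0 \<le> s \<Longrightarrow> s \<le> t \<Longrightarrow> t \<le> T \<Longrightarrow> g \<in> Gamma_bar \<Longrightarrow> h \<in> Gamma_bar
                      \<Longrightarrow> (\<forall>x. g x \<le> h x) \<Longrightarrow> (\<forall>x. S s t g x \<le> S s t h x)"
    and loc: "\<forall>g h s t x R. g \<in> Gamma_bar \<and> h \<in> Gamma_bar \<and> 0 \<le> s \<and> s \<le> t \<and> t \<le> T
                      \<and> R \<ge> 0 \<longrightarrow>
                 (SUP z\<in>sup_ball x R. ereal \<bar>S s t g z - S s t h z\<bar>)
                   \<le> (SUP z\<in>sup_ball x (R + \<alpha> * (t - s)). ereal \<bar>g z - h z\<bar>)"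
    and linear: "\<And>\<rho> s t. snd \<rho> \<in> {-1..0} \<Longrightarrow> 0 \<le> s \<Longrightarrow> s \<le> t \<Longrightarrow> t \<le> T
                      \<Longrightarrow> S s t (lin_fun \<rho>) = (\<lambda>x. lin_fun \<rho> x + vel \<rho> * (t - s))"
    and st: "0 \<le> s" "s \<le> t" "t \<le> T" and g: "g \<in> Gamma_bar" and p: "snd p \<in> {-1..0}"
    and bd: "\<forall>x\<in>sup_ball x0 (\<alpha> * (t - s)). g x \<le> lin_fun p x + C"
  shows "S s t g x0 \<le> lin_fun p x0 + C + vel p * (t - s)"
proof -
  define l where "l = (\<lambda>x. lin_fun p x + C)"
  define g' where "g' = (\<lambda>x. min (g x) (l x))"
  have l: "l \<in> Gamma_bar" unfolding l_def using lin_in[OF p] .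
  have g': "g' \<in> Gamma_bar" unfolding g'_def using min_in[OF g l] .
  have lp: "lin_fun p \<in> Gamma_bar" using lin_in[OF p, of 0] by simp
  have "(SUP z\<in>sup_ball x0 0. ereal \<bar>S s t g z - S s t g' z\<bar>)
                   \<le> (SUP z\<in>sup_ball x0 (0 + \<alpha> * (t - s)). ereal \<bar>g z - g' z\<bar>)"
    by (rule loc[rule_format, where g=g and h=g' and s=s and t=t and x=x0 and R=0]) (use g g' st in auto)
  moreover have "(SUP z\<in>sup_ball x0 (0 + \<alpha> * (t - s)). ereal \<bar>g z - g' z\<bar>) \<le> 0"
    by (rule SUP_least) (use bd in \<open>auto simp: g'_def l_def min_def\<close>)
  moreover have "ereal \<bar>S s t g x0 - S s t g' x0\<bar> \<le> (SUP z\<in>sup_ball x0 0. ereal \<bar>S s t g z - S s t g' z\<bar>)"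
    by (rule SUP_upper) (simp add: sup_ball_def)
  ultimately have "ereal \<bar>S s t g x0 - S s t g' x0\<bar> \<le> 0" by (meson order_trans)
  then have eq: "S s t g x0 = S s t g' x0" by simp
  have "\<forall>x. g' x \<le> l x" by (simp add: g'_def)
  then have "\<forall>x. S s t g' x \<le> S s t l x" using mono[OF st g' l] by blast
  then have "S s t g' x0 \<le> S s t l x0" by blast
  also have "S s t l x0 = S s t (lin_fun p) x0 + C" unfolding l_def using transl[OF st lp] by simp
  also have "\<dots> = lin_fun p x0 + vel p * (t - s) + C" using linear[OF p st] by simp
  finally show ?thesis using eq by simp
qed

lemma op_lower:
  fixes S :: "real \<Rightarrow> real \<Rightarrow> ((real \<times> real) \<Rightarrow> real) \<Rightarrow> ((real \<times> real) \<Rightarrow> real)"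
  assumes transl: "\<And>s t g c. 0 \<le> s \<Longrightarrow> s \<le> t \<Longrightarrow> t \<le> T \<Longrightarrow> g \<in> Gamma_bar
                      \<Longrightarrow> S s t (\<lambda>x. g x + c) = (\<lambda>x. S s t g x + c)"
    and mono: "\<And>s t g h. 0 \<le> s \<Longrightarrow> s \<le> t \<Longrightarrow> t \<le> T \<Longrightarrow> g \<in> Gamma_bar \<Longrightarrow> h \<in> Gamma_bar
                      \<Longrightarrow> (\<forall>x. g x \<le> h x) \<Longrightarrow> (\<forall>x. S s t g x \<le> S s t h x)"
    and loc: "\<forall>g h s t x R. g \<in> Gamma_bar \<and> h \<in> Gamma_bar \<and> 0 \<le> s \<and> s \<le> t \<and> t \<le> T
                      \<and> R \<ge> 0 \<longrightarrow>
                 (SUP z\<in>sup_ball x R. ereal \<bar>S s t g z - S s t h z\<bar>)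
                   \<le> (SUP z\<in>sup_ball x (R + \<alpha> * (t - s)). ereal \<bar>g z - h z\<bar>)"
    and linear: "\<And>\<rho> s t. snd \<rho> \<in> {-1..0} \<Longrightarrow> 0 \<le> s \<Longrightarrow> s \<le> t \<Longrightarrow> t \<le> T
                      \<Longrightarrow> S s t (lin_fun \<rho>) = (\<lambda>x. lin_fun \<rho> x + vel \<rho> * (t - s))"
    and st: "0 \<le> s" "s \<le> t" "t \<le> T" and g: "g \<in> Gamma_bar" and p: "snd p \<in> {-1..0}"
    and bd: "\<forall>x\<in>sup_ball x0 (\<alpha> * (t - s)). g x \<ge> lin_fun p x + C"
  shows "S s t g x0 \<ge> lin_fun p x0 + C + vel p * (t - s)"
proof -
  define l where "l = (\<lambda>x. lin_fun p x + C)"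
  define g' where "g' = (\<lambda>x. max (g x) (l x))"
  have l: "l \<in> Gamma_bar" unfolding l_def using lin_in[OF p] .
  have g': "g' \<in> Gamma_bar" unfolding g'_def using max_in[OF g l] .
  have lp: "lin_fun p \<in> Gamma_bar" using lin_in[OF p, of 0] by simp
  have "(SUP z\<in>sup_ball x0 0. ereal \<bar>S s t g z - S s t g' z\<bar>)
                   \<le> (SUP z\<in>sup_ball x0 (0 + \<alpha> * (t - s)). ereal \<bar>g z - g' z\<bar>)"
    by (rule loc[rule_format, where g=g and h=g' and s=s and t=t and x=x0 and R=0]) (use g g' st in auto)
  moreover have "(SUP z\<in>sup_ball x0 (0 + \<alpha> * (t - s)). ereal \<bar>g z - g' z\<bar>) \<le> 0"
    by (rule SUP_least) (use bd in \<open>auto simp: g'_def l_def max_def\<close>)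
  moreover have "ereal \<bar>S s t g x0 - S s t g' x0\<bar> \<le> (SUP z\<in>sup_ball x0 0. ereal \<bar>S s t g z - S s t g' z\<bar>)"
    by (rule SUP_upper) (simp add: sup_ball_def)
  ultimately have "ereal \<bar>S s t g x0 - S s t g' x0\<bar> \<le> 0" by (meson order_trans)
  then have eq: "S s t g x0 = S s t g' x0" by simp
  have "\<forall>x. l x \<le> g' x" by (simp add: g'_def)
  then have "\<forall>x. S s t l x \<le> S s t g' x" using mono[OF st l g'] by blast
  then have "S s t g' x0 \<ge> S s t l x0" by blast
  moreover have "S s t l x0 = S s t (lin_fun p) x0 + C" unfolding l_def using transl[OF st lp] by simp
  moreover have "\<dots> = lin_fun p x0 + vel p * (t - s) + C" using linear[OF p st] by simp
  ultimately show ?thesis using eq by simp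
qed

lemma shift0:
  fixes F :: "real \<Rightarrow> real"
  assumes "((\<lambda>k. F (c + k)) has_real_derivative D) (at 0)"
  shows "(F has_real_derivative D) (at c)"
proof -
  have e: "(\<lambda>k. F (c + k)) = (\<lambda>k. F (k + c))" by (simp add: add.commute)
  have "((\<lambda>k. F (k + c)) has_real_derivative D) (at 0)" using assms unfolding e .
  then have "(F has_real_derivative D) (at (0 + c))" by (subst DERIV_shift)
  then show ?thesis by simp
qed

lemma open_Om: "open (UNIV \<times> {0<..<T} :: ((real \<times> real) \<times> real) set)"
  by (intro open_Times open_UNIV open_greaterThanLessThan)

lemma smooth_partial:
  assumes "smooth_on Om \<phi>" "e \<in> coord_dirs"
  shows "\<exists>\<phi>'. partial_on Om e \<phi> \<phi>' \<and> continuous_on Om \<phi>'"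
proof -
  have sm: "\<And>g. g \<in> iter_partials Om \<phi> \<Longrightarrow> continuous_on Om g \<and> (\<forall>e\<in>coord_dirs. \<exists>g'. partial_on Om e g g')"
    using assms(1) unfolding smooth_on_def by (rule bspec)
  have b: "\<phi> \<in> iter_partials Om \<phi>" by (rule iter_partials.base)
  have "\<exists>g'. partial_on Om e \<phi> g'" using sm[OF b] assms(2) by blast
  then obtain g' where g': "partial_on Om e \<phi> g'" by (elim exE)
  then have "g' \<in> iter_partials Om \<phi>" by (rule iter_partials.step[OF b assms(2)])
  then have "continuous_on Om g'" using sm by blast
  then show ?thesis using g' by (intro exI conjI)
qed

lemma partial1:
  assumes "partial_on (UNIV \<times> {0<..<T}) ((1, 0), 0) \<phi> \<phi>1" "s \<in> {0<..<T}"
  shows "((\<lambda>c. \<phi> ((c, b), s)) has_real_derivative \<phi>1 ((c, b), s)) (at c)"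
proof -
  have "((\<lambda>k. \<phi> (((c, b), s) + k *\<^sub>R ((1, 0), 0))) has_real_derivative \<phi>1 ((c, b), s)) (at 0)"
    using assms unfolding partial_on_def by simp
  then have "((\<lambda>k. \<phi> ((c + k, b), s)) has_real_derivative \<phi>1 ((c, b), s)) (at 0)" by simp
  then show ?thesis by (rule shift0[where F = "\<lambda>c. \<phi> ((c, b), s)"])
qed

lemma partial2:
  assumes "partial_on (UNIV \<times> {0<..<T}) ((0, 1), 0) \<phi> \<phi>2" "s \<in> {0<..<T}"
  shows "((\<lambda>c. \<phi> ((a, c), s)) has_real_derivative \<phi>2 ((a, c), s)) (at c)"
proof -
  have "((\<lambda>k. \<phi> (((a, c), s) + k *\<^sub>R ((0, 1), 0))) has_real_derivative \<phi>2 ((a, c), s)) (at 0)"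
    using assms unfolding partial_on_def by simp
  then have "((\<lambda>k. \<phi> ((a, c + k), s)) has_real_derivative \<phi>2 ((a, c), s)) (at 0)" by simp
  then show ?thesis by (rule shift0[where F = "\<lambda>c. \<phi> ((a, c), s)"])
qed

lemma between_abs: "min x y \<le> (z::real) \<Longrightarrow> z \<le> max x y \<Longrightarrow> \<bar>z - x\<bar> \<le> \<bar>y - x\<bar>"
  unfolding min_def max_def by (simp split: if_splits)

lemma hr_lemma: "(\<alpha>::real) > 1 \<Longrightarrow> h < min t0 (min r1 r2 / (3 * \<alpha>)) \<Longrightarrow> 3 * \<alpha> * h < r1 \<and> 3 * \<alpha> * h < r2"
proof -
  assume al: "\<alpha> > 1" and h: "h < min t0 (min r1 r2 / (3 * \<alpha>))"
  have "h < min r1 r2 / (3 * \<alpha>)" using h by simp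
  then have "h * (3 * \<alpha>) < min r1 r2" using al by (simp add: pos_less_divide_eq)
  then show ?thesis by (simp add: mult.commute mult.left_commute)
qed

lemma taylor_space:
  fixes \<phi> :: "((real \<times> real) \<times> real) \<Rightarrow> real"
  assumes d1: "partial_on (UNIV \<times> {0<..<T}) ((1, 0), 0) \<phi> \<phi>1" and c1: "continuous_on (UNIV \<times> {0<..<T}) \<phi>1"
    and d2: "partial_on (UNIV \<times> {0<..<T}) ((0, 1), 0) \<phi> \<phi>2" and c2: "continuous_on (UNIV \<times> {0<..<T}) \<phi>2"
    and t0: "t0 \<in> {0<..<T}" and e: "\<epsilon> > 0" and al: "\<alpha> > 1"
  shows "\<exists>\<delta>>0. \<forall>h. 0 < h \<and> h < \<delta> \<longrightarrow> (\<forall>a b. \<bar>a - a0\<bar> \<le> \<alpha> * h \<and> \<bar>b - b0\<bar> \<le> \<alpha> * h \<longrightarrow>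
     \<bar>\<phi> ((a, b), t0 - h) - \<phi> ((a0, b0), t0 - h)
        - (\<phi>1 ((a0, b0), t0) * (a - a0) + \<phi>2 ((a0, b0), t0) * (b - b0))\<bar> \<le> \<epsilon> * h)"
proof -
  define q where "q = ((a0, b0), t0)"
  have qin: "q \<in> UNIV \<times> {0<..<T}" using t0 by (simp add: q_def)
  have i1: "isCont \<phi>1 q" using c1 open_Om qin continuous_on_eq_continuous_at by blast
  have i2: "isCont \<phi>2 q" using c2 open_Om qin continuous_on_eq_continuous_at by blast
  define \<eta> where "\<eta> = \<epsilon> / (2 * \<alpha>)"
  have eta: "\<eta> > 0" using e al by (simp add: \<eta>_def)
  obtain r1 where r1: "r1 > 0" "\<And>x'. dist x' q < r1 \<Longrightarrow> dist (\<phi>1 x') (\<phi>1 q) < \<eta>"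
    using i1 eta unfolding continuous_at_eps_delta by blast
  obtain r2 where r2: "r2 > 0" "\<And>x'. dist x' q < r2 \<Longrightarrow> dist (\<phi>2 x') (\<phi>2 q) < \<eta>"
    using i2 eta unfolding continuous_at_eps_delta by blast
  define \<delta> where "\<delta> = min t0 (min r1 r2 / (3 * \<alpha>))"
  have dpos: "\<delta> > 0" using t0 r1 r2 al by (simp add: \<delta>_def)
  show ?thesis
  proof (intro exI[of _ \<delta>] conjI allI impI dpos, elim conjE)
    fix h a b assume h: "0 < h" "h < \<delta>" and ab: "\<bar>a - a0\<bar> \<le> \<alpha> * h" "\<bar>b - b0\<bar> \<le> \<alpha> * h"
    define s where "s = t0 - h"
    have "h < t0" using h(2) unfolding \<delta>_def by linarith
    then have s: "s \<in> {0<..<T}" using h t0 by (simp add: s_def)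
    have "h < min t0 (min r1 r2 / (3 * \<alpha>))" using h(2) unfolding \<delta>_def .
    then have hr1: "3 * \<alpha> * h < r1" and hr2: "3 * \<alpha> * h < r2" using hr_lemma[OF al] by blast+
    have ahp: "\<alpha> * h > 0" using al h by simp
    have hs: "\<bar>s - t0\<bar> = h" using h by (simp add: s_def)
    have ah: "\<alpha> * h \<ge> h" using al h by simp
    have step1: "\<bar>\<phi> ((a, b0), s) - \<phi> ((a0, b0), s) - \<phi>1 q * (a - a0)\<bar> \<le> \<eta> * \<bar>a - a0\<bar>"
    proof (rule mvt_bound[where F' = "\<lambda>c. \<phi>1 ((c, b0), s)"])
      fix z assume "min a0 a \<le> z" "z \<le> max a0 a"
      then have "\<bar>z - a0\<bar> \<le> \<bar>a - a0\<bar>" by (rule between_abs)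
      then have za: "\<bar>z - a0\<bar> \<le> \<alpha> * h" using ab(1) by linarith
      have "dist ((z, b0), s) q \<le> \<bar>z - a0\<bar> + \<bar>b0 - b0\<bar> + \<bar>s - t0\<bar>" unfolding q_def by (rule dist3)
      then have "dist ((z, b0), s) q \<le> \<alpha> * h + 0 + h" using za hs by simp
      also have "\<dots> < r1" using hr1 ah ahp by simp
      finally have "dist (\<phi>1 ((z, b0), s)) (\<phi>1 q) < \<eta>" using r1(2) by blast
      then show "\<bar>\<phi>1 ((z, b0), s) - \<phi>1 q\<bar> \<le> \<eta>" by (simp add: dist_real_def)
    next
      fix z show "((\<lambda>c. \<phi> ((c, b0), s)) has_real_derivative \<phi>1 ((z, b0), s)) (at z)"
        using partial1[OF d1 s] .
    qed
    have step2: "\<bar>\<phi> ((a, b), s) - \<phi> ((a, b0), s) - \<phi>2 q * (b - b0)\<bar> \<le> \<eta> * \<bar>b - b0\<bar>"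
    proof (rule mvt_bound[where F' = "\<lambda>c. \<phi>2 ((a, c), s)"])
      fix z assume "min b0 b \<le> z" "z \<le> max b0 b"
      then have "\<bar>z - b0\<bar> \<le> \<bar>b - b0\<bar>" by (rule between_abs)
      then have zb: "\<bar>z - b0\<bar> \<le> \<alpha> * h" using ab(2) by linarith
      have "dist ((a, z), s) q \<le> \<bar>a - a0\<bar> + \<bar>z - b0\<bar> + \<bar>s - t0\<bar>" unfolding q_def by (rule dist3)
      then have "dist ((a, z), s) q \<le> \<alpha> * h + \<alpha> * h + h" using zb ab(1) hs by linarith
      also have "\<dots> < r2" using hr2 ah ahp by simp
      finally have "dist (\<phi>2 ((a, z), s)) (\<phi>2 q) < \<eta>" using r2(2) by blast
      then show "\<bar>\<phi>2 ((a, z), s) - \<phi>2 q\<bar> \<le> \<eta>" by (simp add: dist_real_def)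
    next
      fix z show "((\<lambda>c. \<phi> ((a, c), s)) has_real_derivative \<phi>2 ((a, z), s)) (at z)"
        using partial2[OF d2 s] .
    qed
    have m1: "\<eta> * \<bar>a - a0\<bar> \<le> \<eta> * (\<alpha> * h)" using ab eta by (intro mult_left_mono) auto
    have m2: "\<eta> * \<bar>b - b0\<bar> \<le> \<eta> * (\<alpha> * h)" using ab eta by (intro mult_left_mono) auto
    have tot: "\<eta> * (\<alpha> * h) + \<eta> * (\<alpha> * h) = \<epsilon> * h" using al by (simp add: \<eta>_def field_simps)
    show "\<bar>\<phi> ((a, b), t0 - h) - \<phi> ((a0, b0), t0 - h)
        - (\<phi>1 ((a0, b0), t0) * (a - a0) + \<phi>2 ((a0, b0), t0) * (b - b0))\<bar> \<le> \<epsilon> * h"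
    proof -
      define A where "A = \<phi> ((a, b), s) - \<phi> ((a, b0), s) - \<phi>2 q * (b - b0)"
      define B where "B = \<phi> ((a, b0), s) - \<phi> ((a0, b0), s) - \<phi>1 q * (a - a0)"
      have eq: "\<phi> ((a, b), t0 - h) - \<phi> ((a0, b0), t0 - h)
        - (\<phi>1 ((a0, b0), t0) * (a - a0) + \<phi>2 ((a0, b0), t0) * (b - b0)) = A + B"
        unfolding A_def B_def s_def q_def by (simp add: algebra_simps)
      have "\<bar>A + B\<bar> \<le> \<bar>A\<bar> + \<bar>B\<bar>" by (rule abs_triangle_ineq)
      also have "\<dots> \<le> \<eta> * \<bar>b - b0\<bar> + \<eta> * \<bar>a - a0\<bar>"
        unfolding A_def B_def by (rule add_mono[OF step2 step1])
      also have "\<dots> \<le> \<eta> * (\<alpha> * h) + \<eta> * (\<alpha> * h)" by (rule add_mono[OF m2 m1])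
      also have "\<dots> = \<epsilon> * h" by (rule tot)
      finally show ?thesis unfolding eq .
    qed
  qed
qed

lemma deriv_right_upper:
  fixes K :: "real \<Rightarrow> real"
  assumes d: "(K has_real_derivative L) (at 0)" and "\<delta> > 0"
    and b: "\<And>k. 0 < k \<Longrightarrow> k < \<delta> \<Longrightarrow> K k - K 0 \<le> c * k"
  shows "L \<le> c"
proof -
  have t: "((\<lambda>h. (K h - K 0) / h) \<longlongrightarrow> L) (at_right 0)"
    using quot_lims[OF d] by blast
  have "eventually (\<lambda>h. h \<in> {0<..<\<delta>}) (at_right (0::real))" using eventually_at_right_real assms(2) by blast
  hence "eventually (\<lambda>h. c \<ge> (K h - K 0) / h) (at_right 0)"
    by (rule eventually_mono) (use b in \<open>auto simp: pos_divide_le_eq\<close>)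
  thus ?thesis using tendsto_upperbound[OF t] by simp
qed

lemma partialt:
  assumes "partial_on (UNIV \<times> {0<..<T}) ((0, 0), 1) \<phi> \<phi>t" "s \<in> {0<..<T}"
  shows "((\<lambda>k. \<phi> ((a, b), s + k)) has_real_derivative \<phi>t ((a, b), s)) (at 0)"
proof -
  have "((\<lambda>k. \<phi> (((a, b), s) + k *\<^sub>R ((0, 0), 1))) has_real_derivative \<phi>t ((a, b), s)) (at 0)"
    using assms unfolding partial_on_def by auto
  then show ?thesis by simp
qed

lemma partial2_0:
  assumes "partial_on (UNIV \<times> {0<..<T}) ((0, 1), 0) \<phi> \<phi>2" "s \<in> {0<..<T}"
  shows "((\<lambda>k. \<phi> ((a, b + k), s)) has_real_derivative \<phi>2 ((a, b), s)) (at 0)"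
proof -
  have "((\<lambda>k. \<phi> (((a, b), s) + k *\<^sub>R ((0, 1), 0))) has_real_derivative \<phi>2 ((a, b), s)) (at 0)"
    using assms unfolding partial_on_def by auto
  then show ?thesis by simp
qed

locale vsetup =
  fixes T :: real
    and S :: "real \<Rightarrow> real \<Rightarrow> ((real \<times> real) \<Rightarrow> real) \<Rightarrow> ((real \<times> real) \<Rightarrow> real)"
    and f :: "(real \<times> real) \<Rightarrow> real"
    and \<alpha> :: real
  assumes T_pos: "T > 0"
    and maps_into: "\<And>s t g. 0 \<le> s \<Longrightarrow> s \<le> t \<Longrightarrow> t \<le> T \<Longrightarrow> g \<in> Gamma_bar
                      \<Longrightarrow> S s t g \<in> Gamma_bar"
    and transl: "\<And>s t g c. 0 \<le> s \<Longrightarrow> s \<le> t \<Longrightarrow> t \<le> T \<Longrightarrow> g \<in> Gamma_bar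
                      \<Longrightarrow> S s t (\<lambda>x. g x + c) = (\<lambda>x. S s t g x + c)"
    and mono: "\<And>s t g h. 0 \<le> s \<Longrightarrow> s \<le> t \<Longrightarrow> t \<le> T \<Longrightarrow> g \<in> Gamma_bar \<Longrightarrow> h \<in> Gamma_bar
                      \<Longrightarrow> (\<forall>x. g x \<le> h x) \<Longrightarrow> (\<forall>x. S s t g x \<le> S s t h x)"
    and al: "\<alpha> > 1"
    and loc: "\<forall>g h s t x R. g \<in> Gamma_bar \<and> h \<in> Gamma_bar \<and> 0 \<le> s \<and> s \<le> t \<and> t \<le> T
                      \<and> R \<ge> 0 \<longrightarrow>
                 (SUP z\<in>sup_ball x R. ereal \<bar>S s t g z - S s t h z\<bar>)
                   \<le> (SUP z\<in>sup_ball x (R + \<alpha> * (t - s)). ereal \<bar>g z - h z\<bar>)"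
    and semigroup: "\<And>r s t g. 0 \<le> r \<Longrightarrow> r \<le> s \<Longrightarrow> s \<le> t \<Longrightarrow> t \<le> T \<Longrightarrow> g \<in> Gamma_bar
                      \<Longrightarrow> S r t g = S s t (S r s g)"
    and linear: "\<And>\<rho> s t. snd \<rho> \<in> {-1..0} \<Longrightarrow> 0 \<le> s \<Longrightarrow> s \<le> t \<Longrightarrow> t \<le> T
                      \<Longrightarrow> S s t (lin_fun \<rho>) = (\<lambda>x. lin_fun \<rho> x + vel \<rho> * (t - s))"
    and f_in: "f \<in> Gamma_bar"
begin

lemma sub_case:
  fixes \<phi> :: "((real \<times> real) \<times> real) \<Rightarrow> real"
  assumes d1: "partial_on (UNIV \<times> {0<..<T}) ((1, 0), 0) \<phi> \<phi>1" and c1: "continuous_on (UNIV \<times> {0<..<T}) \<phi>1"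
    and d2: "partial_on (UNIV \<times> {0<..<T}) ((0, 1), 0) \<phi> \<phi>2" and c2: "continuous_on (UNIV \<times> {0<..<T}) \<phi>2"
    and dt: "partial_on (UNIV \<times> {0<..<T}) ((0, 0), 1) \<phi> \<phi>t"
    and t0: "t0 \<in> {0<..<T}" and touch: "\<phi> ((a0, b0), t0) = S 0 t0 f (a0, b0)"
    and N: "open N" "((a0, b0), t0) \<in> N" "\<forall>x t. (x, t) \<in> N \<and> t \<in> {0<..<T} \<longrightarrow> S 0 t f x \<le> \<phi> (x, t)"
  shows "\<phi>t ((a0, b0), t0) \<le> vel (\<phi>1 ((a0, b0), t0), \<phi>2 ((a0, b0), t0))"
proof -
  define q where "q = ((a0, b0), t0)"
  define p where "p = (\<phi>1 q, \<phi>2 q)"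
  define ug where "ug = S 0 t0 f"
  have ug: "ug \<in> Gamma_bar" unfolding ug_def using maps_into[OF _ _ _ f_in] t0 by auto
  obtain r where r: "r > 0" "ball q r \<subseteq> N" using N(1,2) open_contains_ball unfolding q_def by blast
  have inN: "((a, b), s) \<in> N" if "\<bar>a - a0\<bar> + \<bar>b - b0\<bar> + \<bar>s - t0\<bar> < r" for a b s
  proof -
    have "dist q ((a, b), s) < r" using dist3[of a b s a0 b0 t0] that by (simp add: q_def dist_commute)
    then show ?thesis using r(2) by auto
  qed
  have K2: "((\<lambda>k. \<phi> ((a0, b0 + k), t0)) has_real_derivative \<phi>2 q) (at 0)"
    using partial2_0[OF d2 t0] by (simp add: q_def)
  have p2lo: "\<phi>2 q \<ge> -1"
  proof (rule deriv_right_lower[OF K2 r(1)])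
    fix k :: real assume k: "0 < k" "k < r"
    have "ug (a0, b0 + k) \<le> \<phi> ((a0, b0 + k), t0)" using N(3) inN[of a0 "b0 + k" t0] k t0 by (auto simp: ug_def)
    moreover have "ug (a0, b0 + k) - ug (a0, b0) \<ge> -k" using Gamma_barD(2)[OF ug, of b0 "b0 + k" a0] k by auto
    ultimately show "\<phi> ((a0, b0 + k), t0) - \<phi> ((a0, b0 + 0), t0) \<ge> -1 * k" using touch by (simp add: ug_def)
  qed
  have p2hi: "\<phi>2 q \<le> 0"
  proof (rule deriv_left_upper[OF K2 r(1)])
    fix k :: real assume k: "0 < k" "k < r"
    have "ug (a0, b0 + - k) \<le> \<phi> ((a0, b0 + - k), t0)" using N(3) inN[of a0 "b0 + - k" t0] k t0 by (auto simp: ug_def)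
    moreover have "ug (a0, b0) - ug (a0, b0 + - k) \<le> 0" using Gamma_barD(2)[OF ug, of "b0 + - k" b0 a0] k by auto
    ultimately show "\<phi> ((a0, b0 + 0), t0) - \<phi> ((a0, b0 + - k), t0) \<le> 0 * k" using touch by (simp add: ug_def)
  qed
  have p: "snd p \<in> {-1..0}" using p2lo p2hi by (simp add: p_def)
  have K: "((\<lambda>k. \<phi> ((a0, b0), t0 + k)) has_real_derivative \<phi>t q) (at 0)"
    using partialt[OF dt t0] by (simp add: q_def)
  have "\<phi>t q \<le> vel p + \<epsilon>" if e: "\<epsilon> > 0" for \<epsilon>
  proof -
    obtain \<delta>1 where d1p: "\<delta>1 > 0" and tay: "\<forall>h. 0 < h \<and> h < \<delta>1 \<longrightarrow> (\<forall>a b. \<bar>a - a0\<bar> \<le> \<alpha> * h \<and> \<bar>b - b0\<bar> \<le> \<alpha> * h \<longrightarrow>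
     \<bar>\<phi> ((a, b), t0 - h) - \<phi> ((a0, b0), t0 - h)
        - (\<phi>1 ((a0, b0), t0) * (a - a0) + \<phi>2 ((a0, b0), t0) * (b - b0))\<bar> \<le> \<epsilon> * h)"
      using taylor_space[OF d1 c1 d2 c2 t0 e al, of a0 b0] by blast
    define \<delta> where "\<delta> = min \<delta>1 (min t0 (r / (3 * \<alpha>)))"
    have dp: "\<delta> > 0" using d1p t0 r al by (simp add: \<delta>_def)
    show ?thesis
    proof (rule deriv_left_upper[OF K dp])
      fix h :: real assume h: "0 < h" "h < \<delta>"
      define s where "s = t0 - h"
      have s: "0 \<le> s" "s \<le> t0" "t0 \<le> T" "s \<in> {0<..<T}" using h t0 by (auto simp: s_def \<delta>_def)
      have hr: "3 * \<alpha> * h < r" using h al by (simp add: \<delta>_def field_simps)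
      have ahp: "h \<le> \<alpha> * h" using al h by simp
      define g where "g = S 0 s f"
      have g: "g \<in> Gamma_bar" unfolding g_def using maps_into[OF _ _ _ f_in] s by auto
      have sg: "ug = S s t0 g" unfolding ug_def g_def using semigroup[OF _ _ _ _ f_in, of 0 s t0] s by simp
      define C where "C = \<phi> ((a0, b0), s) - lin_fun p (a0, b0) + \<epsilon> * h"
      have bd: "\<forall>x\<in>sup_ball (a0, b0) (\<alpha> * (t0 - s)). g x \<le> lin_fun p x + C"
      proof
        fix x assume "x \<in> sup_ball (a0, b0) (\<alpha> * (t0 - s))"
        then obtain a b where x: "x = (a, b)" "\<bar>a - a0\<bar> \<le> \<alpha> * h" "\<bar>b - b0\<bar> \<le> \<alpha> * h"
          by (cases x) (auto simp: sup_ball_def s_def)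
        have hs: "\<bar>s - t0\<bar> = h" using h by (simp add: s_def)
        have "\<bar>a - a0\<bar> + \<bar>b - b0\<bar> + \<bar>s - t0\<bar> < r" unfolding hs using x(2,3) hr ahp h by linarith
        then have "((a, b), s) \<in> N" by (rule inN)
        then have "g x \<le> \<phi> ((a, b), s)" using N(3) s x by (auto simp: g_def)
        moreover have "h < \<delta>1" using h by (simp add: \<delta>_def)
        then have "\<bar>\<phi> ((a, b), s) - \<phi> ((a0, b0), s)
          - (\<phi>1 ((a0, b0), t0) * (a - a0) + \<phi>2 ((a0, b0), t0) * (b - b0))\<bar> \<le> \<epsilon> * h"
          using tay x(2,3) h(1) unfolding s_def by blast
        then have "\<phi> ((a, b), s) \<le> \<phi> ((a0, b0), s)
          + (\<phi>1 ((a0, b0), t0) * (a - a0) + \<phi>2 ((a0, b0), t0) * (b - b0)) + \<epsilon> * h"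
          using abs_le_D1 by linarith
        moreover have "lin_fun p x + C = \<phi> ((a0, b0), s)
          + (\<phi>1 ((a0, b0), t0) * (a - a0) + \<phi>2 ((a0, b0), t0) * (b - b0)) + \<epsilon> * h"
          unfolding C_def lin_fun_def p_def q_def x(1) by (simp add: algebra_simps)
        ultimately show "g x \<le> lin_fun p x + C" by linarith
      qed
      have "S s t0 g (a0, b0) \<le> lin_fun p (a0, b0) + C + vel p * (t0 - s)"
        by (rule op_upper[OF transl mono loc linear s(1,2,3) g p bd])
      then have "\<phi> ((a0, b0), t0) \<le> \<phi> ((a0, b0), s) + \<epsilon> * h + vel p * h"
        using touch sg by (simp add: C_def ug_def s_def)
      then show "\<phi> ((a0, b0), t0 + 0) - \<phi> ((a0, b0), t0 + - h) \<le> (vel p + \<epsilon>) * h"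
        by (simp add: s_def algebra_simps)
    qed
  qed
  then have "\<phi>t q \<le> vel p" by (rule field_le_epsilon)
  then show ?thesis by (simp add: p_def q_def)
qed

lemma super_case:
  fixes \<phi> :: "((real \<times> real) \<times> real) \<Rightarrow> real"
  assumes d1: "partial_on (UNIV \<times> {0<..<T}) ((1, 0), 0) \<phi> \<phi>1" and c1: "continuous_on (UNIV \<times> {0<..<T}) \<phi>1"
    and d2: "partial_on (UNIV \<times> {0<..<T}) ((0, 1), 0) \<phi> \<phi>2" and c2: "continuous_on (UNIV \<times> {0<..<T}) \<phi>2"
    and dt: "partial_on (UNIV \<times> {0<..<T}) ((0, 0), 1) \<phi> \<phi>t"
    and t0: "t0 \<in> {0<..<T}" and touch: "\<phi> ((a0, b0), t0) = S 0 t0 f (a0, b0)"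
    and N: "open N" "((a0, b0), t0) \<in> N" "\<forall>x t. (x, t) \<in> N \<and> t \<in> {0<..<T} \<longrightarrow> \<phi> (x, t) \<le> S 0 t f x"
  shows "\<phi>t ((a0, b0), t0) \<ge> vel (\<phi>1 ((a0, b0), t0), \<phi>2 ((a0, b0), t0))"
proof -
  define q where "q = ((a0, b0), t0)"
  define p where "p = (\<phi>1 q, \<phi>2 q)"
  define ug where "ug = S 0 t0 f"
  have ug: "ug \<in> Gamma_bar" unfolding ug_def using maps_into[OF _ _ _ f_in] t0 by auto
  obtain r where r: "r > 0" "ball q r \<subseteq> N" using N(1,2) open_contains_ball unfolding q_def by blast
  have inN: "((a, b), s) \<in> N" if "\<bar>a - a0\<bar> + \<bar>b - b0\<bar> + \<bar>s - t0\<bar> < r" for a b s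
  proof -
    have "dist q ((a, b), s) < r" using dist3[of a b s a0 b0 t0] that by (simp add: q_def dist_commute)
    then show ?thesis using r(2) by auto
  qed
  have K2: "((\<lambda>k. \<phi> ((a0, b0 + k), t0)) has_real_derivative \<phi>2 q) (at 0)"
    using partial2_0[OF d2 t0] by (simp add: q_def)
  have p2lo: "\<phi>2 q \<ge> -1"
  proof (rule deriv_left_lower[OF K2 r(1)])
    fix k :: real assume k: "0 < k" "k < r"
    have "\<phi> ((a0, b0 + - k), t0) \<le> ug (a0, b0 + - k)" using N(3) inN[of a0 "b0 + - k" t0] k t0 by (auto simp: ug_def)
    moreover have "ug (a0, b0) - ug (a0, b0 + - k) \<ge> - k" using Gamma_barD(2)[OF ug, of "b0 + - k" b0 a0] k by auto
    ultimately show "\<phi> ((a0, b0 + 0), t0) - \<phi> ((a0, b0 + - k), t0) \<ge> -1 * k" using touch by (simp add: ug_def)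
  qed
  have p2hi: "\<phi>2 q \<le> 0"
  proof (rule deriv_right_upper[OF K2 r(1)])
    fix k :: real assume k: "0 < k" "k < r"
    have "\<phi> ((a0, b0 + k), t0) \<le> ug (a0, b0 + k)" using N(3) inN[of a0 "b0 + k" t0] k t0 by (auto simp: ug_def)
    moreover have "ug (a0, b0 + k) - ug (a0, b0) \<le> 0" using Gamma_barD(2)[OF ug, of b0 "b0 + k" a0] k by auto
    ultimately show "\<phi> ((a0, b0 + k), t0) - \<phi> ((a0, b0 + 0), t0) \<le> 0 * k" using touch by (simp add: ug_def)
  qed
  have p: "snd p \<in> {-1..0}" using p2lo p2hi by (simp add: p_def)
  have K: "((\<lambda>k. \<phi> ((a0, b0), t0 + k)) has_real_derivative \<phi>t q) (at 0)"
    using partialt[OF dt t0] by (simp add: q_def)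
  have "vel p \<le> \<phi>t q + \<epsilon>" if e: "\<epsilon> > 0" for \<epsilon>
  proof -
    obtain \<delta>1 where d1p: "\<delta>1 > 0" and tay: "\<forall>h. 0 < h \<and> h < \<delta>1 \<longrightarrow> (\<forall>a b. \<bar>a - a0\<bar> \<le> \<alpha> * h \<and> \<bar>b - b0\<bar> \<le> \<alpha> * h \<longrightarrow>
     \<bar>\<phi> ((a, b), t0 - h) - \<phi> ((a0, b0), t0 - h)
        - (\<phi>1 ((a0, b0), t0) * (a - a0) + \<phi>2 ((a0, b0), t0) * (b - b0))\<bar> \<le> \<epsilon> * h)"
      using taylor_space[OF d1 c1 d2 c2 t0 e al, of a0 b0] by blast
    define \<delta> where "\<delta> = min \<delta>1 (min t0 (r / (3 * \<alpha>)))"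
    have dp: "\<delta> > 0" using d1p t0 r al by (simp add: \<delta>_def)
    show ?thesis
    proof -
    have "\<phi>t q \<ge> vel p - \<epsilon>"
    proof (rule deriv_left_lower[OF K dp])
      fix h :: real assume h: "0 < h" "h < \<delta>"
      define s where "s = t0 - h"
      have s: "0 \<le> s" "s \<le> t0" "t0 \<le> T" "s \<in> {0<..<T}" using h t0 by (auto simp: s_def \<delta>_def)
      have hr: "3 * \<alpha> * h < r" using h al by (simp add: \<delta>_def field_simps)
      have ahp: "h \<le> \<alpha> * h" using al h by simp
      define g where "g = S 0 s f"
      have g: "g \<in> Gamma_bar" unfolding g_def using maps_into[OF _ _ _ f_in] s by auto
      have sg: "ug = S s t0 g" unfolding ug_def g_def using semigroup[OF _ _ _ _ f_in, of 0 s t0] s by simp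
      define C where "C = \<phi> ((a0, b0), s) - lin_fun p (a0, b0) + - \<epsilon> * h"
      have bd: "\<forall>x\<in>sup_ball (a0, b0) (\<alpha> * (t0 - s)). g x \<ge> lin_fun p x + C"
      proof
        fix x assume "x \<in> sup_ball (a0, b0) (\<alpha> * (t0 - s))"
        then obtain a b where x: "x = (a, b)" "\<bar>a - a0\<bar> \<le> \<alpha> * h" "\<bar>b - b0\<bar> \<le> \<alpha> * h"
          by (cases x) (auto simp: sup_ball_def s_def)
        have hs: "\<bar>s - t0\<bar> = h" using h by (simp add: s_def)
        have "\<bar>a - a0\<bar> + \<bar>b - b0\<bar> + \<bar>s - t0\<bar> < r" unfolding hs using x(2,3) hr ahp h by linarith
        then have "((a, b), s) \<in> N" by (rule inN)
        then have "g x \<ge> \<phi> ((a, b), s)" using N(3) s x by (auto simp: g_def)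
        moreover have "h < \<delta>1" using h by (simp add: \<delta>_def)
        then have "\<bar>\<phi> ((a, b), s) - \<phi> ((a0, b0), s)
          - (\<phi>1 ((a0, b0), t0) * (a - a0) + \<phi>2 ((a0, b0), t0) * (b - b0))\<bar> \<le> \<epsilon> * h"
          using tay x(2,3) h(1) unfolding s_def by blast
        then have "\<phi> ((a, b), s) \<ge> \<phi> ((a0, b0), s)
          + (\<phi>1 ((a0, b0), t0) * (a - a0) + \<phi>2 ((a0, b0), t0) * (b - b0)) - \<epsilon> * h"
          using abs_le_D2 by linarith
        moreover have "lin_fun p x + C = \<phi> ((a0, b0), s)
          + (\<phi>1 ((a0, b0), t0) * (a - a0) + \<phi>2 ((a0, b0), t0) * (b - b0)) - \<epsilon> * h"
          unfolding C_def lin_fun_def p_def q_def x(1) by (simp add: algebra_simps)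
        ultimately show "g x \<ge> lin_fun p x + C" by linarith
      qed
      have "S s t0 g (a0, b0) \<ge> lin_fun p (a0, b0) + C + vel p * (t0 - s)"
        by (rule op_lower[OF transl mono loc linear s(1,2,3) g p bd])
      then have "\<phi> ((a0, b0), t0) \<ge> \<phi> ((a0, b0), s) - \<epsilon> * h + vel p * h"
        using touch sg by (simp add: C_def ug_def s_def)
      then show "\<phi> ((a0, b0), t0 + 0) - \<phi> ((a0, b0), t0 + - h) \<ge> (vel p - \<epsilon>) * h"
        by (simp add: s_def algebra_simps)
    qed
    then show ?thesis by simp
    qed
  qed
  then have "vel p \<le> \<phi>t q" by (rule field_le_epsilon)
  then show ?thesis by (simp add: p_def q_def)
qed

end

theorem proposition3p5:
  fixes T :: real
    and S :: "real \<Rightarrow> real \<Rightarrow> ((real \<times> real) \<Rightarrow> real) \<Rightarrow> ((real \<times> real) \<Rightarrow> real)"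
    and f :: "(real \<times> real) \<Rightarrow> real"
  assumes T_pos: "T > 0"
    and maps_into: "\<And>s t g. 0 \<le> s \<Longrightarrow> s \<le> t \<Longrightarrow> t \<le> T \<Longrightarrow> g \<in> Gamma_bar
                      \<Longrightarrow> S s t g \<in> Gamma_bar"
    and transl: "\<And>s t g c. 0 \<le> s \<Longrightarrow> s \<le> t \<Longrightarrow> t \<le> T \<Longrightarrow> g \<in> Gamma_bar
                      \<Longrightarrow> S s t (\<lambda>x. g x + c) = (\<lambda>x. S s t g x + c)"
    and mono: "\<And>s t g h. 0 \<le> s \<Longrightarrow> s \<le> t \<Longrightarrow> t \<le> T \<Longrightarrow> g \<in> Gamma_bar \<Longrightarrow> h \<in> Gamma_bar
                      \<Longrightarrow> (\<forall>x. g x \<le> h x) \<Longrightarrow> (\<forall>x. S s t g x \<le> S s t h x)"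
    and local: "\<exists>\<alpha>>1. \<forall>g h s t x R. g \<in> Gamma_bar \<and> h \<in> Gamma_bar \<and> 0 \<le> s \<and> s \<le> t \<and> t \<le> T
                      \<and> R \<ge> 0 \<longrightarrow>
                 (SUP z\<in>sup_ball x R. ereal \<bar>S s t g z - S s t h z\<bar>)
                   \<le> (SUP z\<in>sup_ball x (R + \<alpha> * (t - s)). ereal \<bar>g z - h z\<bar>)"
    and semigroup: "\<And>r s t g. 0 \<le> r \<Longrightarrow> r \<le> s \<Longrightarrow> s \<le> t \<Longrightarrow> t \<le> T \<Longrightarrow> g \<in> Gamma_bar
                      \<Longrightarrow> S r t g = S s t (S r s g)"
    and semigroup_id: "\<And>t g. 0 \<le> t \<Longrightarrow> t \<le> T \<Longrightarrow> g \<in> Gamma_bar \<Longrightarrow> S t t g = g"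
    and linear: "\<And>\<rho> s t. snd \<rho> \<in> {-1..0} \<Longrightarrow> 0 \<le> s \<Longrightarrow> s \<le> t \<Longrightarrow> t \<le> T
                      \<Longrightarrow> S s t (lin_fun \<rho>) = (\<lambda>x. lin_fun \<rho> x + vel \<rho> * (t - s))"
    and f_in: "f \<in> Gamma_bar"
    and cont: "continuous_on (UNIV \<times> {0..T}) (\<lambda>(x, t). S 0 t f x)"
  shows "viscosity_solution T f (\<lambda>x t. S 0 t f x)"
proof -
  obtain \<alpha> where al: "\<alpha> > 1" and loc: "\<forall>g h s t x R. g \<in> Gamma_bar \<and> h \<in> Gamma_bar \<and> 0 \<le> s \<and> s \<le> t \<and> t \<le> T
                      \<and> R \<ge> 0 \<longrightarrow>
                 (SUP z\<in>sup_ball x R. ereal \<bar>S s t g z - S s t h z\<bar>)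
                   \<le> (SUP z\<in>sup_ball x (R + \<alpha> * (t - s)). ereal \<bar>g z - h z\<bar>)"
    using local by blast
  interpret V: vsetup T S f \<alpha>
    by (rule vsetup.intro[OF T_pos maps_into transl mono al loc semigroup linear f_in])
  have C2: "\<forall>x. S 0 0 f x = f x" using semigroup_id[of 0 f] T_pos f_in by simp
  have C3: "smooth_on (UNIV \<times> {0<..<T}) \<phi> \<and> t0 \<in> {0<..<T} \<and> \<phi> (x0, t0) = S 0 t0 f x0 \<Longrightarrow>
        (let dt = deriv (\<lambda>t. \<phi> (x0, t)) t0;
             grad = (deriv (\<lambda>a. \<phi> ((a, snd x0), t0)) (fst x0),
                     deriv (\<lambda>b. \<phi> ((fst x0, b), t0)) (snd x0))
         in ((\<exists>N. open N \<and> (x0, t0) \<in> N \<and>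
                 (\<forall>x t. (x, t) \<in> N \<and> t \<in> {0<..<T} \<longrightarrow> S 0 t f x \<le> \<phi> (x, t)))
               \<longrightarrow> dt \<le> vel grad) \<and>
            ((\<exists>N. open N \<and> (x0, t0) \<in> N \<and>
                 (\<forall>x t. (x, t) \<in> N \<and> t \<in> {0<..<T} \<longrightarrow> \<phi> (x, t) \<le> S 0 t f x))
               \<longrightarrow> dt \<ge> vel grad))" for \<phi> x0 t0
  proof -
    assume H: "smooth_on (UNIV \<times> {0<..<T}) \<phi> \<and> t0 \<in> {0<..<T} \<and> \<phi> (x0, t0) = S 0 t0 f x0"
    then have sm: "smooth_on (UNIV \<times> {0<..<T}) \<phi>" and t0: "t0 \<in> {0<..<T}"
      and touch0: "\<phi> (x0, t0) = S 0 t0 f x0" by auto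
    obtain a0 b0 where x0: "x0 = (a0, b0)" by (cases x0)
    have touch: "\<phi> ((a0, b0), t0) = S 0 t0 f (a0, b0)" using touch0 unfolding x0 .
    obtain \<phi>1 where d1: "partial_on (UNIV \<times> {0<..<T}) ((1, 0), 0) \<phi> \<phi>1"
        and c1: "continuous_on (UNIV \<times> {0<..<T}) \<phi>1"
      using smooth_partial[OF sm, of "((1, 0), 0)"] by (auto simp: coord_dirs_def)
    obtain \<phi>2 where d2: "partial_on (UNIV \<times> {0<..<T}) ((0, 1), 0) \<phi> \<phi>2"
        and c2: "continuous_on (UNIV \<times> {0<..<T}) \<phi>2"
      using smooth_partial[OF sm, of "((0, 1), 0)"] by (auto simp: coord_dirs_def)
    obtain \<phi>t where dt: "partial_on (UNIV \<times> {0<..<T}) ((0, 0), 1) \<phi> \<phi>t"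
      using smooth_partial[OF sm, of "((0, 0), 1)"] by (auto simp: coord_dirs_def)
    have D1: "deriv (\<lambda>a. \<phi> ((a, b0), t0)) a0 = \<phi>1 ((a0, b0), t0)"
      by (rule DERIV_imp_deriv[OF partial1[OF d1 t0]])
    have D2: "deriv (\<lambda>b. \<phi> ((a0, b), t0)) b0 = \<phi>2 ((a0, b0), t0)"
      by (rule DERIV_imp_deriv[OF partial2[OF d2 t0]])
    have "((\<lambda>t. \<phi> ((a0, b0), t)) has_real_derivative \<phi>t ((a0, b0), t0)) (at t0)"
      by (rule shift0[where F = "\<lambda>t. \<phi> ((a0, b0), t)", OF partialt[OF dt t0]])
    then have Dt: "deriv (\<lambda>t. \<phi> ((a0, b0), t)) t0 = \<phi>t ((a0, b0), t0)"
      by (rule DERIV_imp_deriv)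
    show ?thesis
      unfolding Let_def x0 fst_conv snd_conv D1 D2 Dt
    proof (intro conjI impI)
      assume "\<exists>N. open N \<and> ((a0, b0), t0) \<in> N \<and>
                 (\<forall>x t. (x, t) \<in> N \<and> t \<in> {0<..<T} \<longrightarrow> S 0 t f x \<le> \<phi> (x, t))"
      then obtain N where N: "open N" "((a0, b0), t0) \<in> N"
         "\<forall>x t. (x, t) \<in> N \<and> t \<in> {0<..<T} \<longrightarrow> S 0 t f x \<le> \<phi> (x, t)" by blast
      show "\<phi>t ((a0, b0), t0) \<le> vel (\<phi>1 ((a0, b0), t0), \<phi>2 ((a0, b0), t0))"
        by (rule V.sub_case[OF d1 c1 d2 c2 dt t0 touch N])
    next
      assume "\<exists>N. open N \<and> ((a0, b0), t0) \<in> N \<and>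
                 (\<forall>x t. (x, t) \<in> N \<and> t \<in> {0<..<T} \<longrightarrow> \<phi> (x, t) \<le> S 0 t f x)"
      then obtain N where N: "open N" "((a0, b0), t0) \<in> N"
         "\<forall>x t. (x, t) \<in> N \<and> t \<in> {0<..<T} \<longrightarrow> \<phi> (x, t) \<le> S 0 t f x" by blast
      show "\<phi>t ((a0, b0), t0) \<ge> vel (\<phi>1 ((a0, b0), t0), \<phi>2 ((a0, b0), t0))"
        by (rule V.super_case[OF d1 c1 d2 c2 dt t0 touch N])
    qed
  qed
  show ?thesis
    unfolding viscosity_solution_def
  proof (intro conjI allI impI)
    show "continuous_on (UNIV \<times> {0..T}) (\<lambda>(x, t). S 0 t f x)" by (rule cont)
  next
    fix x show "S 0 0 f x = f x" using C2 by blast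
  next
    fix \<phi> x0 t0
    assume "smooth_on (UNIV \<times> {0<..<T}) \<phi> \<and> t0 \<in> {0<..<T} \<and> \<phi> (x0, t0) = S 0 t0 f x0"
    then show "let dt = deriv (\<lambda>t. \<phi> (x0, t)) t0;
             grad = (deriv (\<lambda>a. \<phi> ((a, snd x0), t0)) (fst x0),
                     deriv (\<lambda>b. \<phi> ((fst x0, b), t0)) (snd x0))
         in ((\<exists>N. open N \<and> (x0, t0) \<in> N \<and>
                 (\<forall>x t. (x, t) \<in> N \<and> t \<in> {0<..<T} \<longrightarrow> S 0 t f x \<le> \<phi> (x, t)))
               \<longrightarrow> dt \<le> vel grad) \<and>
            ((\<exists>N. open N \<and> (x0, t0) \<in> N \<and>
                 (\<forall>x t. (x, t) \<in> N \<and> t \<in> {0<..<T} \<longrightarrow> \<phi> (x, t) \<le> S 0 t f x))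
               \<longrightarrow> dt \<ge> vel grad)" by (rule C3)
  qed
qed

end
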